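(* Let $f$ be convex, $C^2$, with $\nabla^2 f\succ0$ everywhere, and $L_{\text{semi}}$-semi-strongly self-concordant; let $L_{\text{est}}\ge L_{\text{semi}}$, let $x_k\in\mathbb{R}^d$ with $\nabla f(x_k)\ne0$, and let $x_{k+1}$ be the AICN iterate from $x_k$ with stepsize $\alpha_k$. Then: (i) $\|\nabla f(x_{k+1})\|_{x_k}^*\le L_{\text{est}}\alpha_k^2\big(\|\nabla f(x_k)\|_{x_k}^*\big)^2< L_{\text{est}}\big(\|\nabla f(x_k)\|_{x_k}^*\big)^2$. (ii) If moreover $0<c<1$ and $\|\nabla f(x_k)\|_{x_k}^*\le\frac{(2c+1)^2-1}{2L_{\text{est}}}$, then $\|\nabla f(x_{k+1})\|_{x_{k+1}}^*\le\frac{L_{\text{est}}\alpha_k^2}{1-c}\big(\|\nabla f(x_k)\|_{x_k}^*\big)^2$. (iii) If in addition to (ii) also $\|\nabla f(x_k)\|_{x_k}^*\le\frac{(2-c)^2-1}{2L_{\text{est}}}$, then $\|\nabla f(x_{k+1})\|_{x_{k+1}}^*\le\|\nabla f(x_k)\|_{x_k}^*$.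
   Context: Local norms: $\|h\|_x=\langle\nabla^2 f(x)h,h\rangle^{1/2}$, $\|g\|_x^*=\langle g,[\nabla^2 f(x)]^{-1}g\rangle^{1/2}$; $\|H\|_{op}=\sup_{v\neq0}\|Hv\|_x^*/\|v\|_x$ at base point $x$. $f$ is $L_{\text{semi}}$-semi-strongly self-concordant if $\|\nabla^2 f(y)-\nabla^2 f(x)\|_{op}\le L_{\text{semi}}\|y-x\|_x$ for all $x,y$ (operator norm at base point $x$). AICN step with parameter $L_{\text{est}}>0$: $x_{k+1}=x_k-\alpha_k[\nabla^2 f(x_k)]^{-1}\nabla f(x_k)$ with $\alpha_k=\frac{-1+\sqrt{1+2L_{\text{est}}\|\nabla f(x_k)\|_{x_k}^*}}{L_{\text{est}}\|\nabla f(x_k)\|_{x_k}^*}$. *)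

theory Defs
  imports "HOL-Analysis.Analysis"
begin

definition lnorm :: "(real^'n \<Rightarrow> real^'n^'n) \<Rightarrow> real^'n \<Rightarrow> real^'n \<Rightarrow> real" where
  "lnorm H x h = sqrt (h \<bullet> (H x *v h))"

definition dnorm :: "(real^'n \<Rightarrow> real^'n^'n) \<Rightarrow> real^'n \<Rightarrow> real^'n \<Rightarrow> real" where
  "dnorm H x g = sqrt (g \<bullet> (matrix_inv (H x) *v g))"

definition opnorm :: "(real^'n \<Rightarrow> real^'n^'n) \<Rightarrow> real^'n \<Rightarrow> real^'n^'n \<Rightarrow> real" where
  "opnorm H x A = (SUP v\<in>{v. v \<noteq> 0}. dnorm H x (A *v v) / lnorm H x v)"

definition semi_strongly_sc :: "real \<Rightarrow> (real^'n \<Rightarrow> real^'n^'n) \<Rightarrow> bool" where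
  "semi_strongly_sc L H \<longleftrightarrow> (\<forall>x y. opnorm H x (H y - H x) \<le> L * lnorm H x (y - x))"

definition aicn_alpha :: "real \<Rightarrow> (real^'n \<Rightarrow> real^'n) \<Rightarrow> (real^'n \<Rightarrow> real^'n^'n) \<Rightarrow> real^'n \<Rightarrow> real" where
  "aicn_alpha L g H x =
     (-1 + sqrt (1 + 2 * L * dnorm H x (g x))) / (L * dnorm H x (g x))"

definition aicn_step :: "real \<Rightarrow> (real^'n \<Rightarrow> real^'n) \<Rightarrow> (real^'n \<Rightarrow> real^'n^'n) \<Rightarrow> real^'n \<Rightarrow> real^'n" where
  "aicn_step L g H x = x - aicn_alpha L g H x *\<^sub>R (matrix_inv (H x) *v g x)"

end

theory Submission imports Defs begin

lemma pd_inv: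
  fixes A :: "real^'n^'n"
  assumes pd: "\<And>h. h \<noteq> 0 \<Longrightarrow> h \<bullet> (A *v h) > 0"
  shows "A ** matrix_inv A = mat 1" "matrix_inv A ** A = mat 1"
proof -
  have "\<forall>x. A *v x = 0 \<longrightarrow> x = 0" using pd by force
  then have "\<exists>B. B ** A = mat 1" using matrix_left_invertible_ker by blast
  then have "invertible A" using invertible_left_inverse by blast
  then have "\<exists>A'. A ** A' = mat 1 \<and> A' ** A = mat 1" unfolding invertible_def by blast
  then have "A ** matrix_inv A = mat 1 \<and> matrix_inv A ** A = mat 1"
    unfolding matrix_inv_def by (rule someI_ex)
  then show "A ** matrix_inv A = mat 1" "matrix_inv A ** A = mat 1" by auto
qed

lemma pd_inv_vec:
  fixes A :: "real^'n^'n"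
  assumes pd: "\<And>h. h \<noteq> 0 \<Longrightarrow> h \<bullet> (A *v h) > 0"
  shows "A *v (matrix_inv A *v v) = v"
  by (metis matrix_vector_mul_assoc matrix_vector_mul_lid pd_inv(1)[OF pd])

lemma pd_nonneg:
  fixes A :: "real^'n^'n"
  assumes pd: "\<And>h. h \<noteq> 0 \<Longrightarrow> h \<bullet> (A *v h) > 0"
  shows "h \<bullet> (A *v h) \<ge> 0"
  using pd[of h] by (cases "h = 0") auto

lemma cs_form:
  fixes A :: "real^'n^'n"
  assumes pd: "\<And>h. h \<noteq> 0 \<Longrightarrow> h \<bullet> (A *v h) > 0"
    and sym: "\<And>u w. u \<bullet> (A *v w) = w \<bullet> (A *v u)"
  shows "(u \<bullet> (A *v w))\<^sup>2 \<le> (u \<bullet> (A *v u)) * (w \<bullet> (A *v w))"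
proof (cases "w = 0")
  case True then show ?thesis by simp
next
  case False
  define a where "a = u \<bullet> (A *v u)"
  define b where "b = u \<bullet> (A *v w)"
  define c where "c = w \<bullet> (A *v w)"
  have c: "c > 0" using pd False c_def by auto
  define t where "t = - b / c"
  have "0 \<le> (u + t *\<^sub>R w) \<bullet> (A *v (u + t *\<^sub>R w))" by (rule pd_nonneg[OF pd])
  also have "\<dots> = a + 2 * t * b + t\<^sup>2 * c"
    using sym[of w u]
    by (simp add: a_def b_def c_def matrix_vector_right_distrib inner_add_left inner_add_right
        matrix_vector_mult_scaleR algebra_simps power2_eq_square)
  also have "\<dots> = a - b\<^sup>2 / c" using c by (simp add: t_def field_simps power2_eq_square)
  finally have "b\<^sup>2 \<le> a * c" using c by (simp add: field_simps)
  then show ?thesis by (simp add: a_def b_def c_def)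
qed


locale pdx =
  fixes H :: "real^'n \<Rightarrow> real^'n^'n" and x :: "real^'n"
  assumes pd: "\<And>h. h \<noteq> 0 \<Longrightarrow> h \<bullet> (H x *v h) > 0"
    and sym: "\<And>u w. u \<bullet> (H x *v w) = w \<bullet> (H x *v u)"
begin

lemma lnorm_nonneg: "lnorm H x h \<ge> 0" unfolding lnorm_def using pd_nonneg[OF pd, of h] by simp

lemma lnorm_sq: "(lnorm H x h)\<^sup>2 = h \<bullet> (H x *v h)"
  unfolding lnorm_def using pd_nonneg[OF pd, of h] by simp

lemma lnorm_pos: "h \<noteq> 0 \<Longrightarrow> lnorm H x h > 0"
  unfolding lnorm_def using pd by simp

lemma lnorm_scale: "lnorm H x (c *\<^sub>R h) = \<bar>c\<bar> * lnorm H x h"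
proof -
  have "(c *\<^sub>R h) \<bullet> (H x *v (c *\<^sub>R h)) = c\<^sup>2 * (h \<bullet> (H x *v h))"
    by (simp add: matrix_vector_mult_scaleR power2_eq_square)
  then show ?thesis unfolding lnorm_def by (simp add: real_sqrt_mult)
qed

lemma lnorm_minus: "lnorm H x (- h) = lnorm H x h"
  using lnorm_scale[of "-1" h] by simp

lemma dnorm_eq: "dnorm H x v = lnorm H x (matrix_inv (H x) *v v)"
proof -
  have "H x *v (matrix_inv (H x) *v v) = v" by (rule pd_inv_vec[OF pd])
  then show ?thesis unfolding dnorm_def lnorm_def by (metis inner_commute)
qed

lemma dnorm_nonneg: "dnorm H x v \<ge> 0" using dnorm_eq lnorm_nonneg by simp

lemma dnorm_sq: "(matrix_inv (H x) *v v) \<bullet> v = (dnorm H x v)\<^sup>2"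
  unfolding dnorm_def using pd_nonneg[OF pd] dnorm_eq lnorm_sq
  by (metis dnorm_def inner_commute lnorm_nonneg real_sqrt_ge_0_iff real_sqrt_pow2 )

lemma inner_le: "u \<bullet> v \<le> lnorm H x u * dnorm H x v"
proof -
  define a where "a = matrix_inv (H x) *v v"
  have v: "v = H x *v a" unfolding a_def by (rule pd_inv_vec[OF pd, symmetric])
  have "(u \<bullet> (H x *v a))\<^sup>2 \<le> (u \<bullet> (H x *v u)) * (a \<bullet> (H x *v a))"
    by (rule cs_form[OF pd sym])
  also have "\<dots> = (lnorm H x u * dnorm H x v)\<^sup>2"
    by (simp add: power_mult_distrib lnorm_sq dnorm_eq a_def[symmetric])
  finally have "\<bar>u \<bullet> v\<bar> \<le> lnorm H x u * dnorm H x v"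
    using v lnorm_nonneg dnorm_nonneg
    by (metis abs_le_square_iff abs_of_nonneg mult_nonneg_nonneg)
  then show ?thesis by simp
qed

lemma dnorm_scale: "dnorm H x (c *\<^sub>R v) = \<bar>c\<bar> * dnorm H x v"
  unfolding dnorm_eq by (simp add: matrix_vector_mult_scaleR lnorm_scale)

lemma dnorm_zero: "dnorm H x 0 = 0" using dnorm_scale[of 0] by simp

lemma dnorm_triangle: "dnorm H x (v + w) \<le> dnorm H x v + dnorm H x w"
proof -
  define a where "a = matrix_inv (H x) *v (v + w)"
  have "(dnorm H x (v + w))\<^sup>2 = a \<bullet> v + a \<bullet> w"
    by (simp add: a_def dnorm_sq[symmetric] inner_add_right)
  also have "\<dots> \<le> lnorm H x a * dnorm H x v + lnorm H x a * dnorm H x w"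
    by (intro add_mono inner_le)
  also have "\<dots> = dnorm H x (v + w) * (dnorm H x v + dnorm H x w)"
    by (simp add: a_def dnorm_eq algebra_simps)
  finally show ?thesis using dnorm_nonneg
    by (smt (verit) mult_le_cancel_left power2_eq_square)
qed


lemma lower_bound: "\<exists>m>0. \<forall>v. m * (norm v)\<^sup>2 \<le> v \<bullet> (H x *v v)"
proof -
  have cont: "continuous_on (sphere 0 1) (\<lambda>v. v \<bullet> (H x *v v))"
    by (intro continuous_intros linear_continuous_on bounded_linear.linear) simp
  have ne: "sphere (0::real^'n) 1 \<noteq> {}"
    by (metis NO_MATCH_def empty_iff norm_sgn sgn_zero_iff zero_neq_one mem_sphere_0 vector_choose_size zero_le_one)
  obtain v0 where v0: "v0 \<in> sphere 0 1" "\<forall>y\<in>sphere 0 1. v0 \<bullet> (H x *v v0) \<le> y \<bullet> (H x *v y)"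
    using continuous_attains_inf[OF compact_sphere ne cont] by blast
  have m: "v0 \<bullet> (H x *v v0) > 0" using v0(1) pd by (intro pd) auto
  have "\<forall>v. (v0 \<bullet> (H x *v v0)) * (norm v)\<^sup>2 \<le> v \<bullet> (H x *v v)"
  proof
    fix v :: "real^'n"
    show "(v0 \<bullet> (H x *v v0)) * (norm v)\<^sup>2 \<le> v \<bullet> (H x *v v)"
    proof (cases "v = 0")
      case True then show ?thesis by simp
    next
      case False
      define u where "u = (1 / norm v) *\<^sub>R v"
      have "u \<in> sphere 0 1" using False by (simp add: u_def)
      then have "v0 \<bullet> (H x *v v0) \<le> u \<bullet> (H x *v u)" using v0 by blast
      also have "u \<bullet> (H x *v u) = (v \<bullet> (H x *v v)) / (norm v)\<^sup>2"
        by (simp add: u_def matrix_vector_mult_scaleR power2_eq_square)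
      finally show ?thesis using False by (simp add: field_simps)
    qed
  qed
  then show ?thesis using m by blast
qed

lemma op_bdd: "bdd_above ((\<lambda>v. dnorm H x (B *v v) / lnorm H x v) ` {v. v \<noteq> 0})"
proof -
  obtain m where m: "m > 0" "\<And>v. m * (norm v)\<^sup>2 \<le> v \<bullet> (H x *v v)" using lower_bound by blast
  obtain K where K: "\<And>w. norm (matrix_inv (H x) *v w) \<le> norm w * K" and Kn: "K \<ge> 0"
    using bounded_linear.pos_bounded[OF matrix_vector_mul_bounded_linear] by (meson less_imp_le)
  obtain K' where K': "\<And>w. norm (B *v w) \<le> norm w * K'" and K'n: "K' \<ge> 0"
    using bounded_linear.pos_bounded[OF matrix_vector_mul_bounded_linear] by (meson less_imp_le)
  define C where "C = sqrt (K * K'\<^sup>2 / m)"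
  show ?thesis unfolding bdd_above_def
  proof (intro exI ballI)
    fix r assume "r \<in> (\<lambda>v. dnorm H x (B *v v) / lnorm H x v) ` {v. v \<noteq> 0}"
    then obtain v where v: "v \<noteq> 0" "r = dnorm H x (B *v v) / lnorm H x v" by blast
    have lp: "lnorm H x v > 0" using lnorm_pos v by simp
    have "(dnorm H x (B *v v))\<^sup>2 \<le> norm (matrix_inv (H x) *v (B *v v)) * norm (B *v v)"
      unfolding dnorm_sq[symmetric] by (rule norm_cauchy_schwarz)
    also have "\<dots> \<le> (norm (B *v v) * K) * norm (B *v v)"
      by (intro mult_right_mono K) simp
    also have "\<dots> = K * (norm (B *v v))\<^sup>2" by (simp add: power2_eq_square)
    also have "\<dots> \<le> K * (norm v * K')\<^sup>2"
      by (intro mult_left_mono power_mono K' Kn) simp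
    also have "\<dots> = (K * K'\<^sup>2 / m) * (m * (norm v)\<^sup>2)" using m by (simp add: field_simps power2_eq_square)
    also have "\<dots> \<le> (K * K'\<^sup>2 / m) * (lnorm H x v)\<^sup>2"
      using m Kn by (intro mult_left_mono) (auto simp: lnorm_sq)
    also have "\<dots> = (C * lnorm H x v)\<^sup>2" using m Kn by (simp add: C_def power_mult_distrib)
    finally have "dnorm H x (B *v v) \<le> C * lnorm H x v"
    proof (rule power2_le_imp_le)
      show "0 \<le> C * lnorm H x v" using lp m Kn K'n by (simp add: C_def)
    qed
    then show "r \<le> C" using lp v by (simp add: pos_divide_le_eq)
  qed
qed

lemma op_bound: "v \<noteq> 0 \<Longrightarrow> dnorm H x (B *v v) \<le> opnorm H x B * lnorm H x v"
proof -
  assume v: "v \<noteq> 0"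
  have "dnorm H x (B *v v) / lnorm H x v \<le> opnorm H x B"
    unfolding opnorm_def by (rule cSUP_upper[OF _ op_bdd]) (use v in simp)
  then show ?thesis using lnorm_pos[OF v] by (simp add: pos_divide_le_eq)
qed

end


lemma line_deriv_f:
  fixes f :: "real^'n \<Rightarrow> real" and g :: "real^'n \<Rightarrow> real^'n"
  assumes grad: "\<And>x. (f has_derivative (\<lambda>h. g x \<bullet> h)) (at x)"
  shows "((\<lambda>t. f (p + t *\<^sub>R w)) has_real_derivative (g (p + t *\<^sub>R w) \<bullet> w)) (at t)"
proof -
  have l: "((\<lambda>t. p + t *\<^sub>R w) has_derivative (\<lambda>h. h *\<^sub>R w)) (at t)"
    by (auto intro!: derivative_eq_intros)
  have "((\<lambda>t. f (p + t *\<^sub>R w)) has_derivative (\<lambda>h. g (p + t *\<^sub>R w) \<bullet> (h *\<^sub>R w))) (at t)"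
    using has_derivative_compose[OF l grad] by (simp add: o_def)
  moreover have "(\<lambda>h. g (p + t *\<^sub>R w) \<bullet> (h *\<^sub>R w)) = (*) (g (p + t *\<^sub>R w) \<bullet> w)"
    by (rule ext) simp
  ultimately show ?thesis unfolding has_field_derivative_def by simp
qed

lemma line_deriv_g:
  fixes g :: "real^'n \<Rightarrow> real^'n" and H :: "real^'n \<Rightarrow> real^'n^'n"
  assumes hess: "\<And>x. (g has_derivative (\<lambda>h. H x *v h)) (at x)"
  shows "((\<lambda>t. a \<bullet> g (p + t *\<^sub>R w)) has_real_derivative (a \<bullet> (H (p + t *\<^sub>R w) *v w))) (at t)"
proof -
  have l: "((\<lambda>t. p + t *\<^sub>R w) has_derivative (\<lambda>h. h *\<^sub>R w)) (at t)"
    by (auto intro!: derivative_eq_intros)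
  have "((\<lambda>t. g (p + t *\<^sub>R w)) has_derivative (\<lambda>h. H (p + t *\<^sub>R w) *v (h *\<^sub>R w))) (at t)"
    using has_derivative_compose[OF l hess] by (simp add: o_def)
  then have "((\<lambda>t. a \<bullet> g (p + t *\<^sub>R w)) has_derivative (\<lambda>h. a \<bullet> (H (p + t *\<^sub>R w) *v (h *\<^sub>R w)))) (at t)"
    by (rule bounded_linear.has_derivative[OF bounded_linear_inner_right])
  moreover have "(\<lambda>h. a \<bullet> (H (p + t *\<^sub>R w) *v (h *\<^sub>R w))) = (*) (a \<bullet> (H (p + t *\<^sub>R w) *v w))"
    by (rule ext) (simp add: matrix_vector_mult_scaleR)
  ultimately show ?thesis unfolding has_field_derivative_def by simp
qed

lemma schwarz_est:
  fixes f :: "real^'n \<Rightarrow> real" and g :: "real^'n \<Rightarrow> real^'n" and H :: "real^'n \<Rightarrow> real^'n^'n"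
  assumes grad: "\<And>x. (f has_derivative (\<lambda>h. g x \<bullet> h)) (at x)"
    and hess: "\<And>x. (g has_derivative (\<lambda>h. H x *v h)) (at x)"
    and e: "e > 0"
  shows "\<exists>d>0. \<forall>s. 0 < s \<and> s < d \<longrightarrow>
     \<bar>f (x + s *\<^sub>R u + s *\<^sub>R w) - f (x + s *\<^sub>R u) - f (x + s *\<^sub>R w) + f x - s\<^sup>2 * (w \<bullet> (H x *v u))\<bar>
       \<le> e * s\<^sup>2 * (norm w * (norm u + 2 * norm w))"
proof -
  obtain d where d: "d > 0" and
    dd: "\<And>y. norm (y - x) < d \<Longrightarrow> norm (g y - g x - H x *v (y - x)) \<le> e * norm (y - x)"
    using hess[of x] e unfolding has_derivative_at_alt by blast
  define D where "D = d / (norm u + norm w + 1)"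
  have Dp: "D > 0" using d unfolding D_def by (intro divide_pos_pos) (auto intro: add_nonneg_pos)
  show ?thesis
  proof (intro exI conjI allI impI)
    show "D > 0" by (rule Dp)
    fix s :: real assume s: "0 < s \<and> s < D"
    define phi where "phi t = f (x + s *\<^sub>R u + t *\<^sub>R w) - f (x + t *\<^sub>R w)" for t
    have der: "(phi has_real_derivative ((g (x + s *\<^sub>R u + t *\<^sub>R w) - g (x + t *\<^sub>R w)) \<bullet> w)) (at t)" for t
      unfolding phi_def inner_diff_left
      by (intro DERIV_diff line_deriv_f[OF grad])
    obtain tau where tau: "0 < tau" "tau < s"
      "phi s - phi 0 = (s - 0) * ((g (x + s *\<^sub>R u + tau *\<^sub>R w) - g (x + tau *\<^sub>R w)) \<bullet> w)"
      using MVT2[of 0 s phi, OF _ der] s by blast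
    have Delta: "f (x + s *\<^sub>R u + s *\<^sub>R w) - f (x + s *\<^sub>R u) - f (x + s *\<^sub>R w) + f x = phi s - phi 0"
      by (simp add: phi_def)
    define y1 where "y1 = x + s *\<^sub>R u + tau *\<^sub>R w"
    define y2 where "y2 = x + tau *\<^sub>R w"
    have pp: "norm u + norm w + 1 > 0" by (simp add: add_nonneg_pos)
    have sd: "s * (norm u + norm w + 1) < d" using s pp unfolding D_def by (simp add: pos_less_divide_eq)
    have y1x: "y1 - x = s *\<^sub>R u + tau *\<^sub>R w" by (simp add: y1_def)
    have n1: "norm (y1 - x) \<le> s * norm u + tau * norm w"
      unfolding y1x using norm_triangle_ineq[of "s *\<^sub>R u" "tau *\<^sub>R w"] tau s by simp
    have n2: "norm (y2 - x) = tau * norm w" unfolding y2_def using tau by simp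
    have tw: "tau * norm w \<le> s * norm w" using tau by (intro mult_right_mono) auto
    have s1: "s * (norm u + norm w) \<le> s * (norm u + norm w + 1)" using s by simp
    have b1: "norm (y1 - x) < d" using n1 sd tw s1 by (simp add: distrib_left)
    have s2: "s * norm w \<le> s * (norm u + norm w + 1)" using s by (intro mult_left_mono) auto
    have b2: "norm (y2 - x) < d" using n2 sd tw s2 by linarith
    define r1 where "r1 = g y1 - g x - H x *v (y1 - x)"
    define r2 where "r2 = g y2 - g x - H x *v (y2 - x)"
    have "g y1 - g y2 = r1 - r2 + H x *v (y1 - y2)"
      by (simp add: r1_def r2_def matrix_vector_mult_diff_distrib algebra_simps)
    also have "y1 - y2 = s *\<^sub>R u" by (simp add: y1_def y2_def)
    finally have gd: "g y1 - g y2 = r1 - r2 + s *\<^sub>R (H x *v u)" by (simp add: matrix_vector_mult_scaleR)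
    have "norm (r1 - r2) \<le> e * norm (y1 - x) + e * norm (y2 - x)"
      using dd[OF b1] dd[OF b2] unfolding r1_def[symmetric] r2_def[symmetric]
      using norm_triangle_ineq4[of r1 r2] by linarith
    also have "\<dots> \<le> e * (s * norm u + tau * norm w) + e * (tau * norm w)"
      using n1 n2 e by (intro add_mono mult_left_mono) auto
    also have "\<dots> \<le> e * (s * (norm u + 2 * norm w))"
      using e tw by (simp add: algebra_simps mult_left_mono)
    finally have rr: "norm (r1 - r2) \<le> e * (s * (norm u + 2 * norm w))" .
    have "\<bar>(g y1 - g y2) \<bullet> w - s * (w \<bullet> (H x *v u))\<bar> = \<bar>(r1 - r2) \<bullet> w\<bar>"
      unfolding gd by (simp only: inner_add_left inner_scaleR_left inner_commute[of "H x *v u" w])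
    also have "\<dots> \<le> norm (r1 - r2) * norm w" by (rule Cauchy_Schwarz_ineq2)
    also have "\<dots> \<le> e * (s * (norm u + 2 * norm w)) * norm w" by (intro mult_right_mono rr) simp
    finally have est: "\<bar>(g y1 - g y2) \<bullet> w - s * (w \<bullet> (H x *v u))\<bar> \<le> e * (s * (norm u + 2 * norm w)) * norm w" .
    have "\<bar>phi s - phi 0 - s\<^sup>2 * (w \<bullet> (H x *v u))\<bar> = s * \<bar>(g y1 - g y2) \<bullet> w - s * (w \<bullet> (H x *v u))\<bar>"
    proof -
      have "phi s - phi 0 - s\<^sup>2 * (w \<bullet> (H x *v u)) = s * ((g y1 - g y2) \<bullet> w - s * (w \<bullet> (H x *v u)))"
        using tau(3) unfolding y1_def y2_def by (simp add: power2_eq_square right_diff_distrib)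
      then show ?thesis using s by (simp add: abs_mult)
    qed
    also have "\<dots> \<le> s * (e * (s * (norm u + 2 * norm w)) * norm w)"
      using s est by (intro mult_left_mono) auto
    also have "\<dots> = e * s\<^sup>2 * (norm w * (norm u + 2 * norm w))" by (simp add: power2_eq_square algebra_simps)
    finally show "\<bar>f (x + s *\<^sub>R u + s *\<^sub>R w) - f (x + s *\<^sub>R u) - f (x + s *\<^sub>R w) + f x - s\<^sup>2 * (w \<bullet> (H x *v u))\<bar>
       \<le> e * s\<^sup>2 * (norm w * (norm u + 2 * norm w))" using Delta by simp
  qed
qed


lemma hess_sym:
  fixes f :: "real^'n \<Rightarrow> real" and g :: "real^'n \<Rightarrow> real^'n" and H :: "real^'n \<Rightarrow> real^'n^'n"
  assumes grad: "\<And>x. (f has_derivative (\<lambda>h. g x \<bullet> h)) (at x)"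
    and hess: "\<And>x. (g has_derivative (\<lambda>h. H x *v h)) (at x)"
  shows "u \<bullet> (H x *v w) = w \<bullet> (H x *v u)"
proof (rule ccontr)
  assume ne: "u \<bullet> (H x *v w) \<noteq> w \<bullet> (H x *v u)"
  define D where "D = \<bar>w \<bullet> (H x *v u) - u \<bullet> (H x *v w)\<bar>"
  have Dp: "D > 0" using ne by (simp add: D_def)
  define C1 where "C1 = norm w * (norm u + 2 * norm w)"
  define C2 where "C2 = norm u * (norm w + 2 * norm u)"
  have C1: "C1 \<ge> 0" "C2 \<ge> 0" by (simp_all add: C1_def C2_def)
  define e where "e = D / (2 * (C1 + C2 + 1))"
  have ep: "e > 0" using Dp C1 by (simp add: e_def)
  obtain d1 where d1: "d1 > 0" "\<And>s. 0 < s \<and> s < d1 \<Longrightarrow>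
     \<bar>f (x + s *\<^sub>R u + s *\<^sub>R w) - f (x + s *\<^sub>R u) - f (x + s *\<^sub>R w) + f x - s\<^sup>2 * (w \<bullet> (H x *v u))\<bar>
       \<le> e * s\<^sup>2 * C1"
    using schwarz_est[OF grad hess ep, of x u w] unfolding C1_def by blast
  obtain d2 where d2: "d2 > 0" "\<And>s. 0 < s \<and> s < d2 \<Longrightarrow>
     \<bar>f (x + s *\<^sub>R w + s *\<^sub>R u) - f (x + s *\<^sub>R w) - f (x + s *\<^sub>R u) + f x - s\<^sup>2 * (u \<bullet> (H x *v w))\<bar>
       \<le> e * s\<^sup>2 * C2"
    using schwarz_est[OF grad hess ep, of x w u] unfolding C2_def by blast
  define s where "s = min d1 d2 / 2"
  have s: "0 < s" "s < d1" "s < d2" using d1 d2 by (auto simp: s_def)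
  define Q where "Q = f (x + s *\<^sub>R u + s *\<^sub>R w) - f (x + s *\<^sub>R u) - f (x + s *\<^sub>R w) + f x"
  have q1: "\<bar>Q - s\<^sup>2 * (w \<bullet> (H x *v u))\<bar> \<le> e * s\<^sup>2 * C1" using d1(2)[of s] s by (simp add: Q_def)
  have "x + s *\<^sub>R w + s *\<^sub>R u = x + s *\<^sub>R u + s *\<^sub>R w" by (simp add: algebra_simps)
  then have q2: "\<bar>Q - s\<^sup>2 * (u \<bullet> (H x *v w))\<bar> \<le> e * s\<^sup>2 * C2" using d2(2)[of s] s unfolding Q_def
    by (metis (no_types, lifting) add_diff_eq diff_add_eq diff_diff_eq2)
  have "s\<^sup>2 * D \<le> e * s\<^sup>2 * C1 + e * s\<^sup>2 * C2"
  proof -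
    have "s\<^sup>2 * D = \<bar>s\<^sup>2 * (w \<bullet> (H x *v u)) - s\<^sup>2 * (u \<bullet> (H x *v w))\<bar>"
      unfolding D_def by (simp add: abs_mult right_diff_distrib[symmetric])
    also have "\<dots> \<le> \<bar>Q - s\<^sup>2 * (w \<bullet> (H x *v u))\<bar> + \<bar>Q - s\<^sup>2 * (u \<bullet> (H x *v w))\<bar>" by linarith
    finally show ?thesis using q1 q2 by linarith
  qed
  then have "s\<^sup>2 * D \<le> s\<^sup>2 * (e * (C1 + C2))" by (simp add: algebra_simps)
  then have "D \<le> e * (C1 + C2)" using s by (simp add: mult_le_cancel_left)
  also have "\<dots> < D" using Dp C1 unfolding e_def by (simp add: field_simps add_nonneg_pos)
  finally show False by simp
qed


lemma taylor_bound:
  fixes g :: "real^'n \<Rightarrow> real^'n" and H :: "real^'n \<Rightarrow> real^'n^'n"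
  assumes hess: "\<And>x. (g has_derivative (\<lambda>h. H x *v h)) (at x)"
    and P: "pdx H x0"
    and semi: "semi_strongly_sc L0 H"
    and LL: "L0 \<le> L" and Lnn: "L \<ge> 0"
  shows "dnorm H x0 (g (x0 + e) - g x0 - H x0 *v e) \<le> L / 2 * (lnorm H x0 e)\<^sup>2"
proof -
  interpret pdx H x0 by (rule P)
  define r where "r = g (x0 + e) - g x0 - H x0 *v e"
  define N where "N = dnorm H x0 r"
  define l where "l = lnorm H x0 e"
  define a where "a = matrix_inv (H x0) *v r"
  have N0: "N \<ge> 0" unfolding N_def by (rule dnorm_nonneg)
  have l0: "l \<ge> 0" unfolding l_def by (rule lnorm_nonneg)
  have ar: "a \<bullet> r = N\<^sup>2" unfolding a_def N_def by (rule dnorm_sq)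
  have la: "lnorm H x0 a = N" unfolding a_def N_def by (simp add: dnorm_eq)
  show ?thesis
  proof (cases "e = 0")
    case True
    then show ?thesis by (simp add: dnorm_zero lnorm_def)
  next
    case enz: False
    define chi where "chi t = a \<bullet> g (x0 + t *\<^sub>R e) - t * (a \<bullet> (H x0 *v e)) - N * L * l\<^sup>2 * t\<^sup>2 / 2" for t
    have "chi 0 \<ge> chi 1"
    proof (rule DERIV_nonpos_imp_nonincreasing[of 0 1])
      fix t :: real assume t: "0 \<le> t" "t \<le> 1"
      have d1: "((\<lambda>t. a \<bullet> g (x0 + t *\<^sub>R e)) has_real_derivative (a \<bullet> (H (x0 + t *\<^sub>R e) *v e))) (at t)"
        by (rule line_deriv_g[OF hess])
      have d2: "((\<lambda>t. t * (a \<bullet> (H x0 *v e))) has_real_derivative (a \<bullet> (H x0 *v e))) (at t)"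
        by (auto intro!: derivative_eq_intros)
      have d3: "((\<lambda>t. N * L * l\<^sup>2 * t\<^sup>2 / 2) has_real_derivative (N * L * l\<^sup>2 * t)) (at t)"
        by (auto intro!: derivative_eq_intros)
      have ch: "chi = (\<lambda>t. a \<bullet> g (x0 + t *\<^sub>R e) - t * (a \<bullet> (H x0 *v e)) - N * L * l\<^sup>2 * t\<^sup>2 / 2)"
        by (rule ext) (simp add: chi_def)
      have D: "(chi has_real_derivative
          (a \<bullet> (H (x0 + t *\<^sub>R e) *v e) - (a \<bullet> (H x0 *v e)) - N * L * l\<^sup>2 * t)) (at t)"
        unfolding ch by (intro DERIV_diff d1 d2 d3)
      have "a \<bullet> (H (x0 + t *\<^sub>R e) *v e) - (a \<bullet> (H x0 *v e)) = a \<bullet> ((H (x0 + t *\<^sub>R e) - H x0) *v e)"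
        by (simp add: matrix_vector_mult_diff_rdistrib inner_diff_right)
      also have "\<dots> \<le> lnorm H x0 a * dnorm H x0 ((H (x0 + t *\<^sub>R e) - H x0) *v e)" by (rule inner_le)
      also have "\<dots> \<le> N * (opnorm H x0 (H (x0 + t *\<^sub>R e) - H x0) * l)"
        unfolding la l_def using N0 by (intro mult_left_mono op_bound enz)
      also have "\<dots> \<le> N * ((L * (t * l)) * l)"
      proof -
        have "opnorm H x0 (H (x0 + t *\<^sub>R e) - H x0) \<le> L0 * lnorm H x0 ((x0 + t *\<^sub>R e) - x0)"
          using semi unfolding semi_strongly_sc_def by blast
        also have "lnorm H x0 ((x0 + t *\<^sub>R e) - x0) = t * l" using t by (simp add: lnorm_scale l_def)
        also have "L0 * (t * l) \<le> L * (t * l)" using LL t l0 by (intro mult_right_mono) auto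
        finally show ?thesis using N0 l0 by (intro mult_left_mono mult_right_mono) auto
      qed
      also have "\<dots> = N * L * l\<^sup>2 * t" by (simp add: power2_eq_square)
      finally have "a \<bullet> (H (x0 + t *\<^sub>R e) *v e) - (a \<bullet> (H x0 *v e)) - N * L * l\<^sup>2 * t \<le> 0" by simp
      then show "\<exists>y. (chi has_real_derivative y) (at t) \<and> y \<le> 0" using D by blast
    qed simp
    then have "N\<^sup>2 \<le> N * L * l\<^sup>2 / 2"
      unfolding chi_def using ar by (simp add: r_def inner_diff_right algebra_simps)
    then have "N * N \<le> N * (L / 2 * l\<^sup>2)" by (simp add: power2_eq_square algebra_simps)
    then have "N \<le> L / 2 * l\<^sup>2"
      using N0 Lnn by (cases "N = 0") (auto simp: mult_le_cancel_left)
    then show ?thesis by (simp add: N_def r_def l_def)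
  qed
qed


lemma form_compare:
  fixes H :: "real^'n \<Rightarrow> real^'n^'n"
  assumes P: "pdx H y" and Pz: "pdx H z" and semi: "semi_strongly_sc L0 H" and LL: "L0 \<le> L"
  shows "(lnorm H z u)\<^sup>2 \<le> (1 + L * lnorm H y (z - y)) * (lnorm H y u)\<^sup>2"
proof (cases "u = 0")
  case True then show ?thesis by (simp add: lnorm_def)
next
  case False
  interpret pdx H y by (rule P)
  have "u \<bullet> (H z *v u) - u \<bullet> (H y *v u) = u \<bullet> ((H z - H y) *v u)"
    by (simp add: matrix_vector_mult_diff_rdistrib inner_diff_right)
  also have "\<dots> \<le> lnorm H y u * dnorm H y ((H z - H y) *v u)" by (rule inner_le)
  also have "\<dots> \<le> lnorm H y u * (opnorm H y (H z - H y) * lnorm H y u)"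
    by (intro mult_left_mono op_bound False lnorm_nonneg)
  also have "\<dots> \<le> lnorm H y u * ((L * lnorm H y (z - y)) * lnorm H y u)"
  proof -
    have "opnorm H y (H z - H y) \<le> L0 * lnorm H y (z - y)"
      using semi unfolding semi_strongly_sc_def by blast
    also have "\<dots> \<le> L * lnorm H y (z - y)" using LL by (intro mult_right_mono lnorm_nonneg)
    finally show ?thesis by (intro mult_left_mono mult_right_mono lnorm_nonneg)
  qed
  finally have "u \<bullet> (H z *v u) \<le> (1 + L * lnorm H y (z - y)) * (u \<bullet> (H y *v u))"
    by (simp add: lnorm_sq[symmetric] power2_eq_square algebra_simps)
  moreover have "(lnorm H z u)\<^sup>2 \<le> u \<bullet> (H z *v u)"
    by (simp add: pdx.lnorm_sq[OF Pz])
  ultimately show ?thesis by (simp add: lnorm_sq)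
qed

lemma dual_compare:
  fixes H :: "real^'n \<Rightarrow> real^'n^'n"
  assumes Py: "pdx H y" and Pz: "pdx H z" and k: "k \<ge> 0"
    and cmp: "\<And>u. (lnorm H z u)\<^sup>2 \<le> k * (lnorm H y u)\<^sup>2"
  shows "dnorm H y v \<le> sqrt k * dnorm H z v"
proof -
  define a where "a = matrix_inv (H y) *v v"
  have la: "lnorm H y a = dnorm H y v" unfolding a_def by (simp add: pdx.dnorm_eq[OF Py])
  have lz: "lnorm H z a \<le> sqrt k * lnorm H y a"
  proof -
    have "lnorm H z a = sqrt ((lnorm H z a)\<^sup>2)" using pdx.lnorm_nonneg[OF Pz] by simp
    also have "\<dots> \<le> sqrt (k * (lnorm H y a)\<^sup>2)" by (intro real_sqrt_le_mono cmp)
    also have "\<dots> = sqrt k * lnorm H y a" using pdx.lnorm_nonneg[OF Py] by (simp add: real_sqrt_mult)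
    finally show ?thesis .
  qed
  have "(dnorm H y v)\<^sup>2 = a \<bullet> v" unfolding a_def by (simp add: pdx.dnorm_sq[OF Py])
  also have "\<dots> \<le> lnorm H z a * dnorm H z v" by (rule pdx.inner_le[OF Pz])
  also have "\<dots> \<le> sqrt k * dnorm H y v * dnorm H z v"
    using lz la pdx.dnorm_nonneg[OF Pz] by (simp add: mult_right_mono)
  finally have "dnorm H y v * dnorm H y v \<le> dnorm H y v * (sqrt k * dnorm H z v)"
    by (simp add: power2_eq_square algebra_simps)
  then show ?thesis using pdx.dnorm_nonneg[OF Py, of v] pdx.dnorm_nonneg[OF Pz, of v]
    by (cases "dnorm H y v = 0") (auto simp: mult_le_cancel_left k)
qed


lemma alpha_facts:
  fixes L G :: real
  assumes L: "L > 0" and G: "G > 0"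
  defines "a \<equiv> (-1 + sqrt (1 + 2 * L * G)) / (L * G)"
  shows "a > 0" "a < 1" "L * a * G = sqrt (1 + 2 * L * G) - 1" "1 - a = L * a\<^sup>2 * G / 2"
proof -
  define S where "S = sqrt (1 + 2 * L * G)"
  have LG: "L * G > 0" using L G by simp
  have S1: "S > 1" unfolding S_def using LG by (simp add: real_less_rsqrt mult.commute mult.left_commute)
  have S2: "S\<^sup>2 = 1 + 2 * L * G" unfolding S_def using LG by simp
  have aS: "a = (S - 1) / (L * G)" by (simp add: a_def S_def)
  show "a > 0" using S1 LG by (simp add: aS mult.commute)
  have "S < 1 + L * G"
  proof -
    have "S\<^sup>2 < (1 + L * G)\<^sup>2" using S2 LG L G by (simp add: power2_eq_square algebra_simps)
    then show ?thesis using LG S1 by (smt (verit) power_mono)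
  qed
  then show "a < 1" using LG by (simp add: aS divide_less_eq)
  show "L * a * G = sqrt (1 + 2 * L * G) - 1" using LG by (simp add: aS S_def)
  have "L * a\<^sup>2 * G / 2 = (S - 1)\<^sup>2 / (2 * L * G)" using L G by (simp add: aS power2_eq_square field_simps)
  also have "(S - 1)\<^sup>2 = S\<^sup>2 - 2 * S + 1" by (simp add: power2_eq_square algebra_simps)
  also have "(S\<^sup>2 - 2 * S + 1) / (2 * L * G) = 1 - a"
  proof -
    have aLG: "a * (L * G) = S - 1" using L G by (simp add: aS)
    have "(1 - a) * (2 * L * G) = 2 * L * G - 2 * (a * (L * G))" by (simp add: algebra_simps)
    also have "\<dots> = S\<^sup>2 - 2 * S + 1" using S2 aLG by simp
    finally show ?thesis using L G by (simp add: divide_eq_eq)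
  qed
  finally show "1 - a = L * a\<^sup>2 * G / 2" by simp
qed

lemma arith1:
  fixes c s q :: real
  assumes c: "0 < c" "c < 1" and s: "0 \<le> s" "s \<le> 2 * c" and q: "0 \<le> q" "q \<le> s * sqrt (1 + s)"
  shows "sqrt (1 + q) \<le> 1 / (1 - c)"
proof -
  have "1 + s \<le> (1 + c)\<^sup>2" using s c by (simp add: power2_eq_square algebra_simps) (smt (verit) mult_nonneg_nonneg)
  then have "sqrt (1 + s) \<le> sqrt ((1 + c)\<^sup>2)" by (rule real_sqrt_le_mono)
  then have "sqrt (1 + s) \<le> 1 + c" using c by simp
  then have "q \<le> 2 * c * (1 + c)" using q s c
    by (smt (verit, best) mult_mono real_sqrt_ge_zero)
  then have "1 + q \<le> 1 + 2 * c + 2 * c\<^sup>2" by (simp add: power2_eq_square algebra_simps)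
  also have "\<dots> \<le> (1 / (1 - c))\<^sup>2"
  proof -
    have "(1 + 2 * c + 2 * c\<^sup>2) * (1 - c)\<^sup>2 = 1 - c\<^sup>2 * (1 + 2 * c * (1 - c))"
      by (simp add: power2_eq_square algebra_simps)
    also have "\<dots> \<le> 1" using c by (simp add: mult_nonneg_nonneg)
    finally show ?thesis using c by (simp add: power_divide field_simps)
  qed
  finally have "sqrt (1 + q) \<le> sqrt ((1 / (1 - c))\<^sup>2)" by (rule real_sqrt_le_mono)
  then show ?thesis using c by simp
qed


theorem lemma8:
  fixes f :: "real^'n \<Rightarrow> real"
    and g :: "real^'n \<Rightarrow> real^'n"
    and H :: "real^'n \<Rightarrow> real^'n^'n"
    and Lsemi Lest c :: real
    and xk :: "real^'n"
  assumes convex: "convex_on UNIV f"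
    and grad: "\<And>x. (f has_derivative (\<lambda>h. g x \<bullet> h)) (at x)"
    and hess: "\<And>x. (g has_derivative (\<lambda>h. H x *v h)) (at x)"
    and hess_cont: "continuous_on UNIV H"
    and pd: "\<And>x h. h \<noteq> 0 \<Longrightarrow> h \<bullet> (H x *v h) > 0"
    and semi: "semi_strongly_sc Lsemi H"
    and Lest_pos: "0 < Lest"
    and Lest_ge: "Lsemi \<le> Lest"
    and gnz: "g xk \<noteq> 0"
  defines "\<alpha> \<equiv> aicn_alpha Lest g H xk"
    and "xk1 \<equiv> aicn_step Lest g H xk"
  shows "(dnorm H xk (g xk1) \<le> Lest * \<alpha>\<^sup>2 * (dnorm H xk (g xk))\<^sup>2
          \<and> Lest * \<alpha>\<^sup>2 * (dnorm H xk (g xk))\<^sup>2 < Lest * (dnorm H xk (g xk))\<^sup>2)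
    \<and> (0 < c \<and> c < 1 \<and> dnorm H xk (g xk) \<le> ((2*c+1)\<^sup>2 - 1) / (2 * Lest) \<longrightarrow>
         dnorm H xk1 (g xk1) \<le> Lest * \<alpha>\<^sup>2 / (1 - c) * (dnorm H xk (g xk))\<^sup>2)
    \<and> (0 < c \<and> c < 1 \<and> dnorm H xk (g xk) \<le> ((2*c+1)\<^sup>2 - 1) / (2 * Lest)
         \<and> dnorm H xk (g xk) \<le> ((2-c)\<^sup>2 - 1) / (2 * Lest) \<longrightarrow>
         dnorm H xk1 (g xk1) \<le> dnorm H xk (g xk))"
proof -
  have P: "pdx H y" for y
    by unfold_locales (auto intro: pd hess_sym[OF grad hess])
  interpret P0: pdx H xk by (rule P)
  define L where "L = Lest"
  define G where "G = dnorm H xk (g xk)"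
  define d where "d = matrix_inv (H xk) *v g xk"
  have Hd: "H xk *v d = g xk" unfolding d_def by (rule pd_inv_vec) (rule pd)
  have dnz: "d \<noteq> 0" using Hd gnz by auto
  have Gd: "G = lnorm H xk d" by (simp add: G_def d_def P0.dnorm_eq)
  have Gp: "G > 0" using P0.lnorm_pos[OF dnz] Gd by simp
  have L: "L > 0" using Lest_pos by (simp add: L_def)
  have al: "\<alpha> = (-1 + sqrt (1 + 2 * L * G)) / (L * G)"
    by (simp add: \<alpha>_def aicn_alpha_def L_def G_def)
  note AF = alpha_facts[OF L Gp, folded al]
  define e where "e = - \<alpha> *\<^sub>R d"
  have x1: "xk1 = xk + e" by (simp add: xk1_def aicn_step_def e_def d_def \<alpha>_def)
  have le: "lnorm H xk e = \<alpha> * G" using AF(1) P0.lnorm_scale[of "- \<alpha>" d] by (simp add: e_def Gd)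
  have He: "H xk *v e = - \<alpha> *\<^sub>R g xk" unfolding e_def by (simp only: matrix_vector_mult_scaleR Hd)
  define r where "r = g (xk + e) - g xk - H xk *v e"
  have rb: "dnorm H xk r \<le> L / 2 * (\<alpha> * G)\<^sup>2"
    unfolding r_def le[symmetric] L_def
    by (rule taylor_bound[OF hess P semi Lest_ge]) (use Lest_pos in simp)
  have g1: "g xk1 = r + (1 - \<alpha>) *\<^sub>R g xk"
    by (simp add: x1 r_def He algebra_simps)
  have "dnorm H xk (g xk1) \<le> dnorm H xk r + dnorm H xk ((1 - \<alpha>) *\<^sub>R g xk)"
    unfolding g1 by (rule P0.dnorm_triangle)
  also have "\<dots> \<le> L / 2 * (\<alpha> * G)\<^sup>2 + (1 - \<alpha>) * G"
    using rb AF(2) by (simp add: P0.dnorm_scale G_def)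
  also have "\<dots> = L * \<alpha>\<^sup>2 * G\<^sup>2"
  proof -
    have "(1 - \<alpha>) * G = L * \<alpha>\<^sup>2 * G / 2 * G" using AF(4) by simp
    then show ?thesis by (simp add: power2_eq_square algebra_simps)
  qed
  finally have i1: "dnorm H xk (g xk1) \<le> L * \<alpha>\<^sup>2 * G\<^sup>2" .
  have i2: "L * \<alpha>\<^sup>2 * G\<^sup>2 < L * G\<^sup>2"
  proof -
    have "\<alpha>\<^sup>2 < 1" using AF(1,2) by (simp add: power_less_one_iff abs_less_iff power2_eq_square)
      (smt (verit) mult_less_cancel_left2)
    then show ?thesis using L Gp by simp
  qed
  have ii: "dnorm H xk1 (g xk1) \<le> L * \<alpha>\<^sup>2 / (1 - c) * G\<^sup>2"
    if c: "0 < c" "c < 1" and Gc: "G \<le> ((2*c+1)\<^sup>2 - 1) / (2 * L)" for c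
  proof -
    define s where "s = L * \<alpha> * G"
    have s0: "s \<ge> 0" using L AF(1) Gp by (simp add: s_def)
    have s2c: "s \<le> 2 * c"
    proof -
      have "1 + 2 * L * G \<le> (2*c+1)\<^sup>2" using Gc L by (simp add: field_simps)
      then have "sqrt (1 + 2 * L * G) \<le> sqrt ((2*c+1)\<^sup>2)" by (rule real_sqrt_le_mono)
      then show ?thesis using c AF(3) by (simp add: s_def)
    qed
    define r1 where "r1 = lnorm H xk1 (xk - xk1)"
    have r10: "r1 \<ge> 0" unfolding r1_def by (rule pdx.lnorm_nonneg[OF P])
    have "r1\<^sup>2 \<le> (1 + L * lnorm H xk (xk1 - xk)) * (lnorm H xk (xk - xk1))\<^sup>2"
      unfolding r1_def by (rule form_compare[OF P P semi]) (simp add: L_def Lest_ge)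
    also have "xk1 - xk = e" by (simp add: x1)
    also have "xk - xk1 = - e" by (simp add: x1)
    finally have "r1\<^sup>2 \<le> (1 + s) * (\<alpha> * G)\<^sup>2" by (simp add: P0.lnorm_minus le s_def mult.assoc)
    also have "\<dots> = (sqrt (1 + s) * (\<alpha> * G))\<^sup>2" using s0 by (simp add: power_mult_distrib)
    finally have "r1 \<le> sqrt (1 + s) * (\<alpha> * G)"
      by (rule power2_le_imp_le) (use AF(1) Gp s0 in simp)
    then have q: "L * r1 \<le> s * sqrt (1 + s)" using L
      by (simp add: s_def) (metis mult_left_mono less_imp_le mult.assoc mult.commute)
    have sq: "sqrt (1 + L * r1) \<le> 1 / (1 - c)"
      by (rule arith1[OF c s0 s2c _ q]) (use L r10 in simp)
    have "dnorm H xk1 (g xk1) \<le> sqrt (1 + L * r1) * dnorm H xk (g xk1)"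
    proof (rule dual_compare[OF P P])
      show "0 \<le> 1 + L * r1" using L r10 by simp
      show "(lnorm H xk u)\<^sup>2 \<le> (1 + L * r1) * (lnorm H xk1 u)\<^sup>2" for u
        unfolding r1_def by (rule form_compare[OF P P semi]) (simp add: L_def Lest_ge)
    qed
    also have "\<dots> \<le> 1 / (1 - c) * (L * \<alpha>\<^sup>2 * G\<^sup>2)"
      using sq i1 P0.dnorm_nonneg[of "g xk1"] by (intro mult_mono) (use c in auto)
    also have "\<dots> = L * \<alpha>\<^sup>2 / (1 - c) * G\<^sup>2" by simp
    finally show ?thesis .
  qed
  have iii: "dnorm H xk1 (g xk1) \<le> G"
    if c: "0 < c" "c < 1" and Gc: "G \<le> ((2*c+1)\<^sup>2 - 1) / (2 * L)"
      and Gc2: "G \<le> ((2-c)\<^sup>2 - 1) / (2 * L)" for c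
  proof -
    have "1 + 2 * L * G \<le> (2-c)\<^sup>2" using Gc2 L by (simp add: field_simps)
    then have "sqrt (1 + 2 * L * G) \<le> sqrt ((2-c)\<^sup>2)" by (rule real_sqrt_le_mono)
    then have s: "L * \<alpha> * G \<le> 1 - c" using c AF(3) by simp
    have "L * \<alpha>\<^sup>2 / (1 - c) * G\<^sup>2 = \<alpha> * G * ((L * \<alpha> * G) / (1 - c))"
      by (simp add: power2_eq_square)
    also have "\<dots> \<le> \<alpha> * G * 1"
      using s c AF(1) Gp by (intro mult_left_mono) (auto simp: divide_le_eq)
    also have "\<dots> \<le> G" using AF(2) Gp by simp
    finally show ?thesis using ii[OF c Gc] by linarith
  qed
  show ?thesis using i1 i2 ii iii unfolding L_def G_def by blast
qed

end
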